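(* Let $x\in X(l_1,\dots,l_n,l_\infty)$ and let $i\ne j$ be indices in $\{1,\dots,n\}$ with $l_i=l_j$. Then there is $g\in J_n$ such that $gx$ is the diagram obtained from $x$ by interchanging the labels $z_i$ and $z_j$ (i.e. exchanging the positions of $z_i$ and $z_j$) while keeping the unlabelled arc configuration (the numbers of arcs between each pair of positions) unchanged.
   Context: Cactus group: $J_n$ is the group generated by $s_{p,q}$, $1\le p<q\le n$, subject to the relations $s_{p,q}^2=e$; $s_{p,q}s_{p',q'}=s_{p',q'}s_{p,q}$ if $[p,q]$ and $[p',q']$ are disjoint; $s_{p,q}s_{p',q'}s_{p,q}=s_{p+q-q',p+q-p'}$ if $p\le p'<q'\le q$. Arc diagrams: fix nonnegative integers $l_1,\dots,l_n,l_\infty$. On the boundary circle of a closed disc place $n+1$ marked positions: position $0$ (occupied by the distinguished point $z_\infty$) and positions $1,\dots,n$ following it in clockwise order. An arc diagram consists of a bijective assignment of the labels $z_1,\dots,z_n$ to the positions $1,\dots,n$, together with a finite collection of simple arcs in the disc, pairwise disjoint except possibly at endpoints, each joining two distinct marked points, such that the point labelled $z_j$ is an endpoint of exactly $l_j$ arcs for each $j\in\{1,\dots,n,\infty\}$ ($l_j$ is the valence of $z_j$). Parallel arcs are allowed. Diagrams are considered up to isotopy fixing the marked points; equivalently a diagram is determined by the labelling and the number of arcs joining each pair of marked points. $X(l_1,\dots,l_n,l_\infty)$ is the set of all such diagrams. Action: for $1\le p<q\le n$, $s_{p,q}x$ is obtained by choosing a chord $\ell$ separating positions $p,\dots,q$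 from the other marked points, isotoping arcs to cross $\ell$ at most once, reflecting the cut-off region containing positions $p,\dots,q$ by the reflection reversing $\ell$ (so the label at position $p+t$ moves to position $q-t$ and crossing points on $\ell$ are reversed in order), keeping the rest unchanged, and reconnecting arcs at $\ell$. Words act right to left; this is an action of $J_n$. *)

theory Defs
  imports Main
begin

text \<open>
Positions on the boundary circle are 0 (the point z_infinity) and
1..n, in clockwise order. A diagram is a pair (lab, m):
  lab p  = the index j of the label z_j sitting at position p (for 1 <= p <= n),
           and lab p = 0 for all other p;
  m a b  = number of arcs joining positions a and b (0 <= a,b <= n).
\<close>

type_synonym diagram = "(nat \<Rightarrow> nat) \<times> (nat \<Rightarrow> nat \<Rightarrow> nat)"

definition is_diagram :: "nat \<Rightarrow> (nat \<Rightarrow> nat) \<Rightarrow> nat \<Rightarrow> diagram \<Rightarrow> bool" where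
  "is_diagram n l linf x \<longleftrightarrow>
     (let lab = fst x; m = snd x in
       bij_betw lab {1..n} {1..n}
     \<and> (\<forall>p. p \<notin> {1..n} \<longrightarrow> lab p = 0)
     \<and> (\<forall>a b. m a b = m b a)
     \<and> (\<forall>a. m a a = 0)
     \<and> (\<forall>a b. n < a \<longrightarrow> m a b = 0)
     \<comment> \<open>arcs are pairwise non-crossing (they may share endpoints)\<close>
     \<and> (\<forall>a b c d. a < c \<and> c < b \<and> b < d \<and> 0 < m a b \<longrightarrow> m c d = 0)
     \<comment> \<open>valences\<close>
     \<and> (\<forall>p\<in>{1..n}. (\<Sum>q\<le>n. m p q) = l (lab p))
     \<and> (\<Sum>q\<le>n. m 0 q) = linf)"

definition X :: "nat \<Rightarrow> (nat \<Rightarrow> nat) \<Rightarrow> nat \<Rightarrow> diagram set" where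
  "X n l linf = {x. is_diagram n l linf x}"

definition refl_pos :: "nat \<Rightarrow> nat \<Rightarrow> nat \<Rightarrow> nat" where
  "refl_pos p q a = (if p \<le> a \<and> a \<le> q then p + q - a else a)"

definition outs :: "nat \<Rightarrow> nat \<Rightarrow> nat \<Rightarrow> nat list" where
  "outs n p q = [Suc q..<Suc n] @ [0..<p]"

text \<open>The arcs crossing the chord separating p..q from the rest, listed in the order
of their crossing points along the chord (from the p-side to the q-side):
by inside endpoint ascending, and for a fixed inside endpoint by outside
endpoint descending in the clockwise order of outs.\<close>
definition crossings :: "nat \<Rightarrow> nat \<Rightarrow> nat \<Rightarrow> (nat \<Rightarrow> nat \<Rightarrow> nat) \<Rightarrow> (nat \<times> nat) list" where
  "crossings n p q m =
     concat (map (\<lambda>a. concat (map (\<lambda>c. replicate (m a c) (a, c)) (rev (outs n p q)))) [p..<Suc q])"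

text \<open>After reflecting the inside region, the crossing points on the chord are reversed
and the inside parts of the crossing arcs are reflected; reconnecting with the
(unchanged) outside parts pairs the k-th reflected inside endpoint (ascending) with the
k-th outside endpoint of the old crossing sequence.\<close>
definition new_crossings :: "nat \<Rightarrow> nat \<Rightarrow> nat \<Rightarrow> (nat \<Rightarrow> nat \<Rightarrow> nat) \<Rightarrow> (nat \<times> nat) list" where
  "new_crossings n p q m =
     zip (concat (map (\<lambda>a. replicate (\<Sum>c\<leftarrow>outs n p q. m (refl_pos p q a) c) a) [p..<Suc q]))
         (map snd (crossings n p q m))"

definition s_act :: "nat \<Rightarrow> nat \<Rightarrow> nat \<Rightarrow> diagram \<Rightarrow> diagram" where
  "s_act n p q x =
     (let lab = fst x; m = snd x;
          ins = (\<lambda>a. p \<le> a \<and> a \<le> q);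
          nc = new_crossings n p q m in
      (\<lambda>a. lab (refl_pos p q a),
       \<lambda>a b. if n < a \<or> n < b then 0
             else if ins a \<and> ins b then m (refl_pos p q a) (refl_pos p q b)
             else if \<not> ins a \<and> \<not> ins b then m a b
             else if ins a then count_list nc (a, b)
             else count_list nc (b, a)))"

text \<open>Elements of J_n are represented by words in the generators s_{p,q}
(pairs (p,q) with 1 <= p < q <= n); words act right to left.\<close>
definition cactus_word :: "nat \<Rightarrow> (nat \<times> nat) list \<Rightarrow> bool" where
  "cactus_word n w \<longleftrightarrow> (\<forall>(p, q)\<in>set w. 1 \<le> p \<and> p < q \<and> q \<le> n)"

definition act_word :: "nat \<Rightarrow> (nat \<times> nat) list \<Rightarrow> diagram \<Rightarrow> diagram" where
  "act_word n w x = foldr (\<lambda>(p, q) y. s_act n p q y) w x"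

definition swap_labels :: "nat \<Rightarrow> nat \<Rightarrow> diagram \<Rightarrow> diagram" where
  "swap_labels i j x =
     ((\<lambda>a. if fst x a = i then j else if fst x a = j then i else fst x a), snd x)"

end

theory Submission
  imports Defs "HOL-Library.Product_Lexorder"
begin


lemma concat_concat': "concat (concat xss) = concat (map concat xss)"
  by (induction xss) auto

lemma sum_list_map_rev: "sum_list (map f (rev xs)) = (sum_list (map f xs) :: nat)"
  by (induction xs) auto

lemma sorted_rep:
  fixes h :: "'a \<Rightarrow> 'b::linorder"
  shows "sorted (map h xs) \<Longrightarrow> sorted (concat (map (\<lambda>c. replicate (k c) (h c)) xs))"
  by (induction xs) (auto simp: sorted_append)

lemma map_zip_snd: "map (\<lambda>(a,c). (a, f c)) (zip xs ys) = zip xs (map f ys)"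
  by (induction xs arbitrary: ys) (auto simp: zip_Cons1 split: list.split)

lemma concat_rep_same: "concat (map (\<lambda>c. replicate (k c) x) xs) = replicate (sum_list (map k xs)) x"
  by (induction xs) (simp_all add: replicate_add)

lemma count_rep: "count_list (replicate k y) x = (if y = x then k else 0)"
  by (induction k) auto

lemma count_canon: "distinct D \<Longrightarrow>
  count_list (concat (map (\<lambda>d. replicate (f d) d) D)) x = (if x \<in> set D then f x else 0)"
  by (induction D) (auto simp: count_rep)

lemma sorted_wrt_concat_map:
  "(\<And>a. a \<in> set I \<Longrightarrow> sorted_wrt R (f a)) \<Longrightarrow>
   sorted_wrt (\<lambda>a b. \<forall>x\<in>set (f a). \<forall>y \<in> set (f b). R x y) I \<Longrightarrow>
   sorted_wrt R (concat (map f I))"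
  by (induction I) (auto simp: sorted_wrt_append)

lemma split_front:
  fixes key :: "'a \<Rightarrow> 'b::linorder"
  assumes "sorted (map key xs)" "\<forall>u\<in>set xs. u = d \<or> key d < key u"
  shows "xs = replicate (count_list xs d) d @ filter (\<lambda>u. u \<noteq> d) xs"
  using assms
proof (induction xs)
  case Nil then show ?case by simp
next
  case (Cons x xs)
  show ?case
  proof (cases "x = d")
    case True then show ?thesis using Cons by simp
  next
    case False
    then have "key d < key x" using Cons.prems by auto
    moreover have "\<forall>u\<in>set xs. key x \<le> key u" using Cons.prems(1) by auto
    ultimately have "d \<notin> set xs" by fastforce
    have "filter (\<lambda>u. u \<noteq> d) xs = xs" using \<open>d \<notin> set xs\<close> by (induction xs) auto
    then show ?thesis using False \<open>d \<notin> set xs\<close> by simp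
  qed
qed

lemma sorted_canon:
  fixes key :: "'a \<Rightarrow> 'b::linorder"
  assumes "sorted_wrt (<) (map key D)" "set xs \<subseteq> set D" "sorted (map key xs)"
  shows "concat (map (\<lambda>d. replicate (count_list xs d) d) D) = xs"
  using assms
proof (induction D arbitrary: xs)
  case Nil then show ?case by simp
next
  case (Cons d D)
  have fr: "xs = replicate (count_list xs d) d @ filter (\<lambda>u. u \<noteq> d) xs"
    using Cons.prems by (intro split_front[where key=key]) auto
  let ?ys = "filter (\<lambda>u. u \<noteq> d) xs"
  have "set ?ys \<subseteq> set D" using Cons.prems(2) by auto
  moreover have "sorted (map key ?ys)" using Cons.prems(3)
    by (metis filter_map sorted_filter sorted_map)
  ultimately have IH: "concat (map (\<lambda>u. replicate (count_list ?ys u) u) D) = ?ys"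
    using Cons by auto
  have dn: "d \<notin> set D" using Cons.prems(1) by auto
  have "map (\<lambda>u. replicate (count_list xs u) u) D = map (\<lambda>u. replicate (count_list ?ys u) u) D"
  proof (rule map_cong[OF refl])
    fix u assume "u \<in> set D"
    then have "u \<noteq> d" using dn by auto
    then show "replicate (count_list xs u) u = replicate (count_list ?ys u) u"
      by (simp add: count_list_eq_length_filter) (metis (mono_tags, lifting) filter_cong)
  qed
  then have "concat (map (\<lambda>u. replicate (count_list xs u) u) (d # D))
     = replicate (count_list xs d) d @ ?ys" using IH by (simp del: map_eq_conv)
  then show ?case using fr by simp
qed

lemma zip_sorted:
  fixes xs :: "'a::linorder list" and ys :: "'b::linorder list"
  shows "sorted xs \<Longrightarrow> sorted ys \<Longrightarrow> sorted (zip xs ys)"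
proof (induction xs arbitrary: ys)
  case Nil then show ?case by simp
next
  case (Cons x xs)
  then show ?case
  proof (cases ys)
    case Nil then show ?thesis by simp
  next
    case (Cons y ys')
    have "\<forall>u\<in>set (zip xs ys'). (x, y) \<le> u"
    proof
      fix u assume "u \<in> set (zip xs ys')"
      then obtain a b where u: "u = (a,b)" "a \<in> set xs" "b \<in> set ys'"
        by (metis set_zip_leftD set_zip_rightD surj_pair)
      then have "x \<le> a" "y \<le> b" using Cons.prems \<open>ys = y # ys'\<close> by auto
      then show "(x,y) \<le> u" using u by auto
    qed
    then show ?thesis using Cons.IH Cons.prems \<open>ys = y # ys'\<close> by auto
  qed
qed

lemma sum_count_fst:
  assumes "set (map snd xs) \<subseteq> set Os" "distinct Os"
  shows "sum_list (map (\<lambda>c. count_list xs (t,c)) Os) = count_list (map fst xs) t"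
proof -
  have "(\<Sum>c\<in>set Os. count_list xs (t,c)) = count_list (map fst xs) t"
    using assms(1)
  proof (induction xs)
    case Nil then show ?case by simp
  next
    case (Cons x xs)
    obtain a b where x: "x = (a,b)" by fastforce
    have b: "b \<in> set Os" using Cons.prems x by auto
    have e: "(\<Sum>c\<in>set Os. (if (a,b) = (t,c) then 1 else 0::nat)) = (if a = t then 1 else 0)"
      using b by (cases "a = t") (simp_all add: sum.delta')
    have "(\<Sum>c\<in>set Os. count_list (x#xs) (t,c))
       = (\<Sum>c\<in>set Os. count_list xs (t,c) + (if (a,b) = (t,c) then 1 else 0))"
      using x by (intro sum.cong) auto
    also have "\<dots> = (\<Sum>c\<in>set Os. count_list xs (t,c)) + (if a = t then 1 else 0)"
      by (simp only: sum.distrib e)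
    finally show ?case using Cons x by simp
  qed
  then show ?thesis using assms(2) by (simp add: sum_list_distinct_conv_sum_set)
qed

lemma sum_count_snd:
  assumes "set (map fst xs) \<subseteq> set Is" "distinct Is"
  shows "sum_list (map (\<lambda>a. count_list xs (a,t)) Is) = count_list (map snd xs) t"
proof -
  have "sum_list (map (\<lambda>a. count_list (map prod.swap xs) (t,a)) Is) = count_list (map fst (map prod.swap xs)) t"
    using assms by (intro sum_count_fst) auto
  moreover have "count_list (map prod.swap xs) (t,a) = count_list xs (a,t)" for a
    by (induction xs) auto
  ultimately show ?thesis by (simp add: comp_def)
qed



definition Sm :: "nat \<Rightarrow> nat \<Rightarrow> nat \<Rightarrow> (nat \<Rightarrow> nat \<Rightarrow> nat) \<Rightarrow> nat \<Rightarrow> nat \<Rightarrow> nat" where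
  "Sm n p q m = (\<lambda>a b. if n < a \<or> n < b then 0
             else if (p \<le> a \<and> a \<le> q) \<and> (p \<le> b \<and> b \<le> q) then m (refl_pos p q a) (refl_pos p q b)
             else if \<not> (p \<le> a \<and> a \<le> q) \<and> \<not> (p \<le> b \<and> b \<le> q) then m a b
             else if (p \<le> a \<and> a \<le> q) then count_list (new_crossings n p q m) (a, b)
             else count_list (new_crossings n p q m) (b, a))"

lemma snd_s_act: "snd (s_act n p q x) = Sm n p q (snd x)"
  unfolding s_act_def Sm_def Let_def by simp

lemma fst_s_act: "fst (s_act n p q x) = (\<lambda>a. fst x (refl_pos p q a))"
  unfolding s_act_def Let_def by simp

lemma refl_refl[simp]: "refl_pos p q (refl_pos p q a) = a"
  unfolding refl_pos_def by auto

lemma refl_in: "p \<le> a \<Longrightarrow> a \<le> q \<Longrightarrow> p \<le> refl_pos p q a \<and> refl_pos p q a \<le> q"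
  unfolding refl_pos_def by auto

lemma refl_out: "\<not> (p \<le> a \<and> a \<le> q) \<Longrightarrow> refl_pos p q a = a"
  unfolding refl_pos_def by auto

lemma map_refl_upt: "map (refl_pos p q) [p..<Suc q] = rev [p..<Suc q]"
  by (rule nth_equalityI) (auto simp: refl_pos_def rev_nth simp del: upt_Suc)

lemma sum_refl: "sum_list (map (\<lambda>a. g (refl_pos p q a)) [p..<Suc q]) = (sum_list (map g [p..<Suc q]) :: nat)"
proof -
  have "map (\<lambda>a. g (refl_pos p q a)) [p..<Suc q] = map g (map (refl_pos p q) [p..<Suc q])" by simp
  also have "\<dots> = rev (map g [p..<Suc q])" by (simp only: map_refl_upt rev_map)
  finally show ?thesis by (simp only: sum_list_rev)
qed

lemma set_outs: "p \<le> q \<Longrightarrow> q \<le> n \<Longrightarrow> set (outs n p q) = {c. c \<le> n \<and> (c < p \<or> q < c)}"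
  unfolding outs_def by auto

lemma distinct_outs: "p \<le> q \<Longrightarrow> distinct (outs n p q)"
  unfolding outs_def by auto

definition Dl :: "nat \<Rightarrow> nat \<Rightarrow> nat \<Rightarrow> (nat \<times> nat) list" where
  "Dl n p q = concat (map (\<lambda>a. map (\<lambda>c. (a,c)) (rev (outs n p q))) [p..<Suc q])"

lemma cr_canon: "crossings n p q m = concat (map (\<lambda>d. replicate (case d of (a,c) \<Rightarrow> m a c) d) (Dl n p q))"
  unfolding crossings_def Dl_def by (simp add: map_concat comp_def concat_concat' del: upt_Suc)

lemma set_Dl: "set (Dl n p q) = set [p..<Suc q] \<times> set (outs n p q)"
  unfolding Dl_def by auto

lemma fst_cr: "map fst (crossings n p q m) = concat (map (\<lambda>a. replicate (sum_list (map (m a) (outs n p q))) a) [p..<Suc q])"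
  unfolding crossings_def by (simp add: map_concat comp_def concat_rep_same sum_list_map_rev del: upt_Suc)

lemma set_cr: "set (crossings n p q m) \<subseteq> set [p..<Suc q] \<times> set (outs n p q)"
  unfolding crossings_def by auto

definition Lm :: "nat \<Rightarrow> nat \<Rightarrow> nat \<Rightarrow> (nat \<Rightarrow> nat \<Rightarrow> nat) \<Rightarrow> nat list" where
  "Lm n p q m = concat (map (\<lambda>a. replicate (sum_list (map (m (refl_pos p q a)) (outs n p q))) a) [p..<Suc q])"

lemma nc_eq: "new_crossings n p q m = zip (Lm n p q m) (map snd (crossings n p q m))"
  unfolding new_crossings_def Lm_def by simp

lemma len_Lm: "length (Lm n p q m) = length (crossings n p q m)"
proof -
  have "length (Lm n p q m) = length (map fst (crossings n p q m))"
    unfolding Lm_def fst_cr by (simp add: length_concat comp_def sum_refl[where g = "\<lambda>a. sum_list (map (m a) (outs n p q))"] del: upt_Suc)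
  then show ?thesis by simp
qed

lemma fst_nc: "map fst (new_crossings n p q m) = Lm n p q m"
  using len_Lm by (simp add: nc_eq)

lemma snd_nc: "map snd (new_crossings n p q m) = map snd (crossings n p q m)"
  using len_Lm by (simp add: nc_eq)

lemma set_Lm: "set (Lm n p q m) \<subseteq> set [p..<Suc q]"
  unfolding Lm_def by auto

lemma count_Lm: "t \<in> set [p..<Suc q] \<Longrightarrow> count_list (Lm n p q m) t = sum_list (map (m (refl_pos p q t)) (outs n p q))"
  unfolding Lm_def by (subst count_canon) auto

definition idx :: "nat \<Rightarrow> nat \<Rightarrow> nat \<Rightarrow> nat \<Rightarrow> nat" where
  "idx n p q c = (if c < p then p - 1 - c else p + n - c)"


lemma idx_sorted: "p \<le> q \<Longrightarrow> sorted_wrt (<) (map (idx n p q) (rev (outs n p q)))"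
proof -
  assume pq: "p \<le> q"
  have A: "sorted_wrt (<) (map (idx n p q) (rev [0..<p]))"
    unfolding sorted_wrt_map sorted_wrt_rev
    by (rule sorted_wrt_mono_rel[OF _ sorted_wrt_upt]) (auto simp: idx_def)
  have B: "sorted_wrt (<) (map (idx n p q) (rev [Suc q..<Suc n]))"
    unfolding sorted_wrt_map sorted_wrt_rev
    by (rule sorted_wrt_mono_rel[OF _ sorted_wrt_upt]) (use pq in \<open>auto simp: idx_def\<close>)
  have C0: "idx n p q x < idx n p q y" if "x < p" "Suc q \<le> y" "y \<le> n" for x y
    using pq that unfolding idx_def by simp
  have C: "\<forall>x\<in>set (map (idx n p q) (rev [0..<p])). \<forall>y\<in>set (map (idx n p q) (rev [Suc q..<Suc n])). x < y"
    using C0 by auto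
  show ?thesis unfolding outs_def rev_append map_append sorted_wrt_append
    using A B C by blast
qed

lemma Dl_sorted: assumes "p \<le> q"
  shows "sorted_wrt (<) (map (\<lambda>(a,c). (a, idx n p q c)) (Dl n p q))"
proof -
  define f where "f = (\<lambda>a. map (\<lambda>c. (a::nat, idx n p q c)) (rev (outs n p q)))"
  have e: "map (\<lambda>(a,c). (a, idx n p q c)) (Dl n p q) = concat (map f [p..<Suc q])"
    unfolding Dl_def f_def by (simp add: map_concat comp_def del: upt_Suc)
  have s1: "sorted_wrt (<) (f a)" for a
  proof -
    have "sorted_wrt (\<lambda>x y. idx n p q x < idx n p q y) (rev (outs n p q))"
      using idx_sorted[OF assms, of n] by (simp only: sorted_wrt_map)
    then show ?thesis unfolding f_def sorted_wrt_map
      by (rule sorted_wrt_mono_rel[rotated]) simp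
  qed
  have s2: "sorted_wrt (\<lambda>a b. \<forall>x\<in>set (f a). \<forall>y\<in>set (f b). x < y) [p..<Suc q]"
    by (rule sorted_wrt_mono_rel[OF _ sorted_wrt_upt]) (auto simp: f_def)
  show ?thesis unfolding e by (rule sorted_wrt_concat_map[OF s1 s2])
qed

lemma distinct_Dl: "p \<le> q \<Longrightarrow> distinct (Dl n p q)"
  using Dl_sorted[of p q n] strict_sorted_iff distinct_map by blast

lemma count_cr: "p \<le> q \<Longrightarrow> a \<in> set [p..<Suc q] \<Longrightarrow> c \<in> set (outs n p q) \<Longrightarrow> count_list (crossings n p q m) (a,c) = m a c"
  unfolding cr_canon by (subst count_canon) (auto simp: distinct_Dl set_Dl)



definition NC :: "(nat \<Rightarrow> nat \<Rightarrow> nat) \<Rightarrow> bool" where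
  "NC m \<longleftrightarrow> (\<forall>a b c d. a < c \<and> c < b \<and> b < d \<and> 0 < m a b \<longrightarrow> m c d = 0)"

lemma nc_idx:
  assumes nc: "NC m" and sym: "\<forall>a b. m a b = m b a" and pq: "p \<le> q" "q \<le> n"
    and aa: "a < a'" "p \<le> a" "a' \<le> q"
    and c: "c \<in> set (outs n p q)" "c' \<in> set (outs n p q)"
    and m: "0 < m a c" "0 < m a' c'"
  shows "idx n p q c \<le> idx n p q c'"
proof -
  have c1: "c \<le> n \<and> (c < p \<or> q < c)" and c2: "c' \<le> n \<and> (c' < p \<or> q < c')"
    using c set_outs[OF pq] by auto
  have m1: "0 < m c a" using m sym by metis
  have m2: "0 < m c' a'" using m sym by metis
  have N: "\<And>a b c d. a < c \<Longrightarrow> c < b \<Longrightarrow> b < d \<Longrightarrow> 0 < m a b \<Longrightarrow> m c d = 0"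
    using nc unfolding NC_def by blast
  show ?thesis
  proof (cases "c < p")
    case True
    show ?thesis
    proof (cases "c' < p")
      case True
      have "c' \<le> c"
      proof (rule ccontr)
        assume "\<not> c' \<le> c"
        then have "m c' a' = 0" using N[of c c' a a' ] m1 aa \<open>c' < p\<close> by linarith
        then show False using m2 by simp
      qed
      then show ?thesis using \<open>c < p\<close> True unfolding idx_def by simp
    next
      case False
      then show ?thesis using \<open>c < p\<close> c2 pq unfolding idx_def by (simp, linarith)
    qed
  next
    case False
    then have "q < c" using c1 by simp
    show ?thesis
    proof (cases "c' < p")
      case True
      then have "m a c = 0" using N[of c' a a' c] m2 aa \<open>q < c\<close> by linarith
      then show ?thesis using m by simp
    next
      case False
      then have "q < c'" using c2 by simp
      have "c' \<le> c"
      proof (rule ccontr)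
        assume "\<not> c' \<le> c"
        then have "m a' c' = 0" using N[of a a' c c'] m aa \<open>q < c\<close> by linarith
        then show False using m by simp
      qed
      then show ?thesis using \<open>\<not> c < p\<close> False c1 c2 unfolding idx_def by simp
    qed
  qed
qed

lemma snd_cr_sorted:
  assumes nc: "NC m" and sym: "\<forall>a b. m a b = m b a" and pq: "p \<le> q" "q \<le> n"
  shows "sorted (map (idx n p q) (map snd (crossings n p q m)))"
proof -
  define g where "g = (\<lambda>a. concat (map (\<lambda>c. replicate (m a c) (idx n p q c)) (rev (outs n p q))))"
  have e: "map (idx n p q) (map snd (crossings n p q m)) = concat (map g [p..<Suc q])"
    unfolding crossings_def g_def by (simp add: map_concat comp_def del: upt_Suc)
  have s1: "sorted (g a)" for a
    unfolding g_def
    by (rule sorted_rep) (use idx_sorted[OF pq(1), of n] strict_sorted_imp_sorted in auto)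
  have s2: "sorted_wrt (\<lambda>a b. \<forall>x\<in>set (g a). \<forall>y\<in>set (g b). x \<le> y) [p..<Suc q]"
  proof (rule sorted_wrt_mono_rel[OF _ sorted_wrt_upt])
    fix a b assume ab: "a \<in> set [p..<Suc q]" "b \<in> set [p..<Suc q]" "a < b"
    show "\<forall>x\<in>set (g a). \<forall>y\<in>set (g b). x \<le> y"
    proof (intro ballI)
      fix x y assume "x \<in> set (g a)" "y \<in> set (g b)"
      then obtain c c' where "c \<in> set (outs n p q)" "0 < m a c" "x = idx n p q c"
        "c' \<in> set (outs n p q)" "0 < m b c'" "y = idx n p q c'"
        unfolding g_def by auto
      then show "x \<le> y" using nc_idx[OF nc sym pq, of a b c c'] ab by auto
    qed
  qed
  show ?thesis unfolding e
    by (rule sorted_wrt_concat_map) (use s1 s2 in \<open>auto\<close>)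
qed

lemma set_nc: "set (new_crossings n p q m) \<subseteq> set [p..<Suc q] \<times> set (outs n p q)"
proof -
  have "set (new_crossings n p q m) \<subseteq> set (Lm n p q m) \<times> set (map snd (crossings n p q m))"
    unfolding nc_eq by (auto dest: set_zip_leftD set_zip_rightD)
  then show ?thesis using set_Lm[of n p q m] set_cr[of n p q m] by fastforce
qed

lemma Lm_sorted: "sorted (Lm n p q m)"
  unfolding Lm_def
  using sorted_rep[of id "[p..<Suc q]" "\<lambda>a. sum_list (map (m (refl_pos p q a)) (outs n p q))"]
  by (simp del: upt_Suc)

lemma cr_Sm:
  assumes nc: "NC m" and sym: "\<forall>a b. m a b = m b a" and pq: "p \<le> q" "q \<le> n"
  shows "crossings n p q (Sm n p q m) = new_crossings n p q m"
proof -
  have "crossings n p q (Sm n p q m) =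
        concat (map (\<lambda>d. replicate (count_list (new_crossings n p q m) d) d) (Dl n p q))"
    unfolding cr_canon
  proof (intro arg_cong[where f=concat] map_cong refl)
    fix d assume "d \<in> set (Dl n p q)"
    then obtain a c where d: "d = (a,c)" "a \<in> set [p..<Suc q]" "c \<in> set (outs n p q)"
      using set_Dl by auto
    then have "p \<le> a" "a \<le> q" "c \<le> n" "c < p \<or> q < c" using set_outs[OF pq] by auto
    then have "Sm n p q m a c = count_list (new_crossings n p q m) (a,c)"
      unfolding Sm_def using pq by auto
    then show "replicate (case d of (a, c) \<Rightarrow> Sm n p q m a c) d =
               replicate (count_list (new_crossings n p q m) d) d" using d by simp
  qed
  also have "\<dots> = new_crossings n p q m"
  proof (rule sorted_canon[where key="\<lambda>(a,c). (a, idx n p q c)"])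
    show "sorted_wrt (<) (map (\<lambda>(a, c). (a, idx n p q c)) (Dl n p q))" by (rule Dl_sorted[OF pq(1)])
    show "set (new_crossings n p q m) \<subseteq> set (Dl n p q)" using set_nc set_Dl by metis
    have "map (\<lambda>(a, c). (a, idx n p q c)) (new_crossings n p q m) =
          zip (Lm n p q m) (map (idx n p q) (map snd (crossings n p q m)))"
      unfolding nc_eq by (rule map_zip_snd)
    then show "sorted (map (\<lambda>(a, c). (a, idx n p q c)) (new_crossings n p q m))"
      using zip_sorted[OF Lm_sorted snd_cr_sorted[OF nc sym pq]] by simp
  qed
  finally show ?thesis .
qed


lemma Sm_big: "n < a \<or> n < b \<Longrightarrow> Sm n p q m a b = 0"
  unfolding Sm_def by auto

lemma Sm_ii: "a \<le> n \<Longrightarrow> b \<le> n \<Longrightarrow> p \<le> a \<Longrightarrow> a \<le> q \<Longrightarrow> p \<le> b \<Longrightarrow> b \<le> q \<Longrightarrow>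
   Sm n p q m a b = m (refl_pos p q a) (refl_pos p q b)"
  unfolding Sm_def by auto

lemma Sm_oo: "a \<le> n \<Longrightarrow> b \<le> n \<Longrightarrow> \<not>(p \<le> a \<and> a \<le> q) \<Longrightarrow> \<not>(p \<le> b \<and> b \<le> q) \<Longrightarrow>
   Sm n p q m a b = m a b"
  unfolding Sm_def by auto

lemma Sm_io: "a \<le> n \<Longrightarrow> b \<le> n \<Longrightarrow> p \<le> a \<Longrightarrow> a \<le> q \<Longrightarrow> \<not>(p \<le> b \<and> b \<le> q) \<Longrightarrow>
   Sm n p q m a b = count_list (new_crossings n p q m) (a, b)"
  unfolding Sm_def by auto

lemma Sm_oi: "a \<le> n \<Longrightarrow> b \<le> n \<Longrightarrow> \<not>(p \<le> a \<and> a \<le> q) \<Longrightarrow> p \<le> b \<Longrightarrow> b \<le> q \<Longrightarrow>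
   Sm n p q m a b = count_list (new_crossings n p q m) (b, a)"
  unfolding Sm_def by auto



lemma Lm_Sm:
  assumes nc: "NC m" and sym: "\<forall>a b. m a b = m b a" and pq: "p \<le> q" "q \<le> n"
  shows "Lm n p q (Sm n p q m) = map fst (crossings n p q m)"
  unfolding Lm_def fst_cr
proof (intro arg_cong[where f=concat] map_cong refl arg_cong[where f="\<lambda>k. replicate k _"])
  fix a assume a: "a \<in> set [p..<Suc q]"
  then have ra: "p \<le> refl_pos p q a" "refl_pos p q a \<le> q" using refl_in by auto
  have "map (Sm n p q m (refl_pos p q a)) (outs n p q) =
        map (\<lambda>c. count_list (new_crossings n p q m) (refl_pos p q a, c)) (outs n p q)"
  proof (rule map_cong[OF refl])
    fix c assume "c \<in> set (outs n p q)"
    then have "c \<le> n" "c < p \<or> q < c" using set_outs[OF pq] by auto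
    then show "Sm n p q m (refl_pos p q a) c = count_list (new_crossings n p q m) (refl_pos p q a, c)"
      using ra pq by (intro Sm_io) auto
  qed
  also have "sum_list \<dots> = count_list (map fst (new_crossings n p q m)) (refl_pos p q a)"
    by (rule sum_count_fst) (use set_nc[of n p q m] distinct_outs[OF pq(1)] in auto)
  also have "\<dots> = sum_list (map (m a) (outs n p q))"
  proof -
    have "refl_pos p q a \<in> set [p..<Suc q]" using ra by auto
    then show ?thesis unfolding fst_nc by (simp only: count_Lm refl_refl)
  qed
  finally show "sum_list (map (Sm n p q m (refl_pos p q a)) (outs n p q)) = sum_list (map (m a) (outs n p q))" .
qed

lemma nc_Sm:
  assumes nc: "NC m" and sym: "\<forall>a b. m a b = m b a" and pq: "p \<le> q" "q \<le> n"
  shows "new_crossings n p q (Sm n p q m) = crossings n p q m"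
proof -
  have "new_crossings n p q (Sm n p q m) = zip (Lm n p q (Sm n p q m)) (map snd (crossings n p q (Sm n p q m)))"
    by (rule nc_eq)
  also have "\<dots> = zip (map fst (crossings n p q m)) (map snd (new_crossings n p q m))"
    by (simp only: Lm_Sm[OF assms] cr_Sm[OF assms])
  also have "\<dots> = zip (map fst (crossings n p q m)) (map snd (crossings n p q m))"
    by (simp only: snd_nc)
  also have "\<dots> = crossings n p q m" by (rule zip_map_fst_snd)
  finally show ?thesis .
qed

lemma Sm_Sm:
  assumes nc: "NC m" and sym: "\<forall>a b. m a b = m b a" and pq: "p \<le> q" "q \<le> n"
    and z: "\<forall>a b. n < a \<longrightarrow> m a b = 0"
  shows "Sm n p q (Sm n p q m) = m"
proof (intro ext)
  fix a b
  have so: "b \<in> set (outs n p q)" if "b \<le> n" "\<not> (p \<le> b \<and> b \<le> q)" for b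
    using that pq unfolding outs_def by auto
  have si: "a \<in> set [p..<Suc q]" if "p \<le> a" "a \<le> q" for a using that by auto
  show "Sm n p q (Sm n p q m) a b = m a b"
  proof (cases "n < a \<or> n < b")
    case True
    then have "m a b = 0"
    proof
      assume "n < a" then show ?thesis using z by blast
    next
      assume "n < b" then have "m b a = 0" using z by blast
      then show ?thesis using sym by simp
    qed
    moreover have "Sm n p q (Sm n p q m) a b = 0" using True by (rule Sm_big)
    ultimately show ?thesis by simp
  next
    case False
    then have an: "a \<le> n" "b \<le> n" by auto
    consider "(p \<le> a \<and> a \<le> q) \<and> (p \<le> b \<and> b \<le> q)" | "\<not>(p \<le> a \<and> a \<le> q) \<and> \<not> (p \<le> b \<and> b \<le> q)"
      | "(p \<le> a \<and> a \<le> q) \<and> \<not> (p \<le> b \<and> b \<le> q)" | "\<not> (p \<le> a \<and> a \<le> q) \<and> (p \<le> b \<and> b \<le> q)" by blast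
    then show ?thesis
    proof cases
      case 1
      have ra: "p \<le> refl_pos p q a" "refl_pos p q a \<le> q" using refl_in[of p a q] 1 by simp_all
      have rb: "p \<le> refl_pos p q b" "refl_pos p q b \<le> q" using refl_in[of p b q] 1 by simp_all
      have "Sm n p q (Sm n p q m) a b = Sm n p q m (refl_pos p q a) (refl_pos p q b)"
        using 1 an by (intro Sm_ii) auto
      also have "\<dots> = m (refl_pos p q (refl_pos p q a)) (refl_pos p q (refl_pos p q b))"
        using ra rb pq by (intro Sm_ii) auto
      also have "\<dots> = m a b" by simp
      finally show ?thesis .
    next
      case 2
      then show ?thesis using an by (simp add: Sm_oo)
    next
      case 3
      then have "Sm n p q (Sm n p q m) a b = count_list (new_crossings n p q (Sm n p q m)) (a,b)"
        using an by (intro Sm_io) auto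
      also have "\<dots> = count_list (crossings n p q m) (a,b)" using nc_Sm[OF assms(1-4)] by simp
      also have "\<dots> = m a b" using 3 an by (intro count_cr pq si so) auto
      finally show ?thesis .
    next
      case 4
      then have "Sm n p q (Sm n p q m) a b = count_list (new_crossings n p q (Sm n p q m)) (b,a)"
        using an by (intro Sm_oi) auto
      also have "\<dots> = count_list (crossings n p q m) (b,a)" using nc_Sm[OF assms(1-4)] by simp
      also have "\<dots> = m b a" using 4 an by (intro count_cr pq si so) auto
      finally show ?thesis using sym by simp
    qed
  qed
qed

lemma Sm_sym: "\<forall>a b. m a b = m b a \<Longrightarrow> Sm n p q m a b = Sm n p q m b a"
  unfolding Sm_def by auto

lemma Sm_diag: "\<forall>a. m a a = 0 \<Longrightarrow> Sm n p q m a a = 0"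
  unfolding Sm_def by auto

lemma Sm_zero: "n < a \<Longrightarrow> Sm n p q m a b = 0"
  unfolding Sm_def by auto



lemma split_atMost:
  assumes pq: "p \<le> q" "q \<le> n"
  shows "{..n} = {p..q} \<union> set (outs n p q)" "{p..q} \<inter> set (outs n p q) = {}"
  using pq unfolding outs_def by auto

lemma valence_Sm:
  assumes sym: "\<forall>a b. m a b = m b a" and pq: "p \<le> q" "q \<le> n" and t: "t \<le> n"
  shows "(\<Sum>u\<le>n. Sm n p q m t u) = (\<Sum>u\<le>n. m (refl_pos p q t) u)"
proof -
  have fin: "finite {p..q}" "finite (set (outs n p q))" by auto
  have so: "u \<le> n \<and> \<not> (p \<le> u \<and> u \<le> q)" if "u \<in> set (outs n p q)" for u
    using that pq unfolding outs_def by auto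
  have dI: "distinct [p..<Suc q]" by simp
  have sI: "set [p..<Suc q] = {p..q}" by auto
  have dO: "distinct (outs n p q)" using distinct_outs[OF pq(1)] .
  have S: "\<And>f. (\<Sum>u\<le>n. f u) = (\<Sum>u\<in>{p..q}. f u) + (\<Sum>u\<in>set (outs n p q). (f u::nat))"
    by (subst split_atMost(1)[OF pq]) (rule sum.union_disjoint[OF fin split_atMost(2)[OF pq]])
  show ?thesis
  proof (cases "p \<le> t \<and> t \<le> q")
    case True
    have rt: "p \<le> refl_pos p q t" "refl_pos p q t \<le> q" using refl_in[of p t q] True by simp_all
    have A: "(\<Sum>u\<in>{p..q}. Sm n p q m t u) = (\<Sum>u\<in>{p..q}. m (refl_pos p q t) u)"
    proof -
      have "(\<Sum>u\<in>{p..q}. Sm n p q m t u) = (\<Sum>u\<in>{p..q}. m (refl_pos p q t) (refl_pos p q u))"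
        using True t pq by (intro sum.cong refl Sm_ii) auto
      also have "\<dots> = (\<Sum>u\<in>{p..q}. m (refl_pos p q t) u)"
        by (rule sum.reindex_bij_witness[of _ "refl_pos p q" "refl_pos p q"])
           (auto simp: refl_pos_def)
      finally show ?thesis .
    qed
    have B: "(\<Sum>u\<in>set (outs n p q). Sm n p q m t u) = (\<Sum>u\<in>set (outs n p q). m (refl_pos p q t) u)"
    proof -
      have "(\<Sum>u\<in>set (outs n p q). Sm n p q m t u) = (\<Sum>u\<in>set (outs n p q). count_list (new_crossings n p q m) (t,u))"
        using True t so by (intro sum.cong refl Sm_io) auto
      also have "\<dots> = sum_list (map (\<lambda>u. count_list (new_crossings n p q m) (t,u)) (outs n p q))"
        using dO by (simp add: sum_list_distinct_conv_sum_set)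
      also have "\<dots> = count_list (map fst (new_crossings n p q m)) t"
        by (rule sum_count_fst) (use set_nc[of n p q m] dO in auto)
      also have "\<dots> = sum_list (map (m (refl_pos p q t)) (outs n p q))"
        unfolding fst_nc using True by (intro count_Lm) auto
      also have "\<dots> = (\<Sum>u\<in>set (outs n p q). m (refl_pos p q t) u)"
        using dO by (simp add: sum_list_distinct_conv_sum_set)
      finally show ?thesis .
    qed
    show ?thesis using A B S by simp
  next
    case False
    then have rt: "refl_pos p q t = t" by (rule refl_out)
    have tO: "t \<in> set (outs n p q)" using False t pq unfolding outs_def by auto
    have A: "(\<Sum>u\<in>set (outs n p q). Sm n p q m t u) = (\<Sum>u\<in>set (outs n p q). m t u)"
      using False t so by (intro sum.cong refl Sm_oo) auto
    have B: "(\<Sum>u\<in>{p..q}. Sm n p q m t u) = (\<Sum>u\<in>{p..q}. m t u)"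
    proof -
      have "(\<Sum>u\<in>{p..q}. Sm n p q m t u) = (\<Sum>u\<in>{p..q}. count_list (new_crossings n p q m) (u,t))"
        using False t pq by (intro sum.cong refl Sm_oi) auto
      also have "\<dots> = sum_list (map (\<lambda>u. count_list (new_crossings n p q m) (u,t)) [p..<Suc q])"
        using dI sI by (simp add: sum_list_distinct_conv_sum_set del: upt_Suc)
      also have "\<dots> = count_list (map snd (new_crossings n p q m)) t"
        by (rule sum_count_snd) (use set_nc[of n p q m] dI in auto)
      also have "\<dots> = count_list (map snd (crossings n p q m)) t" by (simp only: snd_nc)
      also have "\<dots> = sum_list (map (\<lambda>u. count_list (crossings n p q m) (u,t)) [p..<Suc q])"
        by (rule sum_count_snd[symmetric]) (use set_cr[of n p q m] dI in auto)
      also have "\<dots> = sum_list (map (\<lambda>u. m u t) [p..<Suc q])"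
        by (intro arg_cong[where f=sum_list] map_cong refl count_cr pq tO) auto
      also have "\<dots> = (\<Sum>u\<in>{p..q}. m t u)"
        using dI sI sym by (simp add: sum_list_distinct_conv_sum_set del: upt_Suc)
      finally show ?thesis .
    qed
    show ?thesis using A B S rt by simp
  qed
qed

lemma Sm_fix:
  assumes sym: "\<forall>a b. m a b = m b a" and pq: "p \<le> q" "q \<le> n"
    and z: "\<forall>a b. n < a \<longrightarrow> m a b = 0"
    and hin: "\<forall>u v. p \<le> u \<and> u \<le> q \<and> p \<le> v \<and> v \<le> q \<longrightarrow> m (refl_pos p q u) (refl_pos p q v) = m u v"
    and hs: "\<forall>a\<in>set [p..<Suc q]. sum_list (map (m (refl_pos p q a)) (outs n p q)) = sum_list (map (m a) (outs n p q))"
  shows "Sm n p q m = m"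
proof -
  have L: "Lm n p q m = map fst (crossings n p q m)"
    unfolding Lm_def fst_cr using hs by (intro arg_cong[where f=concat] map_cong refl) auto
  have N: "new_crossings n p q m = crossings n p q m"
    unfolding nc_eq L by (rule zip_map_fst_snd)
  show ?thesis
  proof (intro ext)
    fix a b
    have so: "b \<in> set (outs n p q)" if "b \<le> n" "\<not> (p \<le> b \<and> b \<le> q)" for b
      using that pq unfolding outs_def by auto
    have si: "a \<in> set [p..<Suc q]" if "p \<le> a" "a \<le> q" for a using that by auto
    show "Sm n p q m a b = m a b"
    proof (cases "n < a \<or> n < b")
      case True
      then have "m a b = 0"
      proof
        assume "n < a" then show ?thesis using z by blast
      next
        assume "n < b" then have "m b a = 0" using z by blast
        then show ?thesis using sym by simp
      qed
      moreover have "Sm n p q m a b = 0" using True by (rule Sm_big)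
      ultimately show ?thesis by simp
    next
      case False
      then have an: "a \<le> n" "b \<le> n" by auto
      consider "(p \<le> a \<and> a \<le> q) \<and> (p \<le> b \<and> b \<le> q)" | "\<not>(p \<le> a \<and> a \<le> q) \<and> \<not> (p \<le> b \<and> b \<le> q)"
        | "(p \<le> a \<and> a \<le> q) \<and> \<not> (p \<le> b \<and> b \<le> q)" | "\<not> (p \<le> a \<and> a \<le> q) \<and> (p \<le> b \<and> b \<le> q)" by blast
      then show ?thesis
      proof cases
        case 1
        then show ?thesis using an hin by (simp add: Sm_ii)
      next
        case 2
        then show ?thesis using an by (simp add: Sm_oo)
      next
        case 3
        then have "Sm n p q m a b = count_list (new_crossings n p q m) (a,b)"
          using an by (intro Sm_io) auto
        also have "\<dots> = m a b" unfolding N using 3 an by (intro count_cr pq si so) auto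
        finally show ?thesis .
      next
        case 4
        then have "Sm n p q m a b = count_list (new_crossings n p q m) (b,a)"
          using an by (intro Sm_oi) auto
        also have "\<dots> = m b a" unfolding N using 4 an by (intro count_cr pq si so) auto
        finally show ?thesis using sym by simp
      qed
    qed
  qed
qed



lemma swap_comm: "s_act n p q (swap_labels i j x) = swap_labels i j (s_act n p q x)"
proof (rule prod_eqI)
  show "fst (s_act n p q (swap_labels i j x)) = fst (swap_labels i j (s_act n p q x))"
    unfolding fst_s_act swap_labels_def fst_conv by (rule refl)
  show "snd (s_act n p q (swap_labels i j x)) = snd (swap_labels i j (s_act n p q x))"
    unfolding snd_s_act swap_labels_def snd_conv by (rule refl)
qed

lemma act_word_swap: "act_word n w (swap_labels i j x) = swap_labels i j (act_word n w x)"
  unfolding act_word_def by (induction w) (auto simp: swap_comm)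

lemma swap_sym: "i \<noteq> j \<Longrightarrow> swap_labels i j x = swap_labels j i x"
  unfolding swap_labels_def by auto

lemma adj:
  assumes sym: "\<forall>a b. M a b = M b a" and dg: "\<forall>a. M a a = 0" and z: "\<forall>a b. n < a \<longrightarrow> M a b = 0"
    and V: "(\<Sum>u\<le>n. M a u) = (\<Sum>u\<le>n. M (Suc a) u)" and an: "Suc a \<le> n"
    and li: "lab a = i" and lj: "lab (Suc a) = j"
    and ui: "\<forall>t. lab t = i \<longrightarrow> t = a" and uj: "\<forall>t. lab t = j \<longrightarrow> t = Suc a" and ij: "i \<noteq> j"
  shows "s_act n a (Suc a) (lab, M) = swap_labels i j (lab, M)"
proof -
  have pq: "a \<le> Suc a" "Suc a \<le> n" using an by auto
  have r1: "refl_pos a (Suc a) a = Suc a" and r2: "refl_pos a (Suc a) (Suc a) = a"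
    unfolding refl_pos_def by auto
  have fin: "finite {a..Suc a}" "finite (set (outs n a (Suc a)))" by auto
  have S: "\<And>f. (\<Sum>u\<le>n. f u) = (\<Sum>u\<in>{a..Suc a}. f u) + (\<Sum>u\<in>set (outs n a (Suc a)). (f u::nat))"
    by (subst split_atMost(1)[OF pq]) (rule sum.union_disjoint[OF fin split_atMost(2)[OF pq]])
  have two: "{a..Suc a} = {a, Suc a}" by auto
  have dO: "distinct (outs n a (Suc a))" using distinct_outs[OF pq(1)] .
  have E: "sum_list (map (M a) (outs n a (Suc a))) = sum_list (map (M (Suc a)) (outs n a (Suc a)))"
  proof -
    have "(\<Sum>u\<le>n. M a u) = M a (Suc a) + (\<Sum>u\<in>set (outs n a (Suc a)). M a u)"
      using S[of "M a"] dg unfolding two by simp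
    moreover have "(\<Sum>u\<le>n. M (Suc a) u) = M (Suc a) a + (\<Sum>u\<in>set (outs n a (Suc a)). M (Suc a) u)"
      using S[of "M (Suc a)"] dg unfolding two by simp
    ultimately have "(\<Sum>u\<in>set (outs n a (Suc a)). M a u) = (\<Sum>u\<in>set (outs n a (Suc a)). M (Suc a) u)"
      using V sym by simp
    then show ?thesis using dO by (simp add: sum_list_distinct_conv_sum_set)
  qed
  have snd: "Sm n a (Suc a) M = M"
  proof (rule Sm_fix[OF sym pq z])
    show "\<forall>u v. a \<le> u \<and> u \<le> Suc a \<and> a \<le> v \<and> v \<le> Suc a \<longrightarrow>
          M (refl_pos a (Suc a) u) (refl_pos a (Suc a) v) = M u v"
    proof (intro allI impI)
      fix u v assume "a \<le> u \<and> u \<le> Suc a \<and> a \<le> v \<and> v \<le> Suc a"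
      then have "u = a \<or> u = Suc a" "v = a \<or> v = Suc a" by auto
      then show "M (refl_pos a (Suc a) u) (refl_pos a (Suc a) v) = M u v"
        using r1 r2 sym dg by auto
    qed
    show "\<forall>b\<in>set [a..<Suc (Suc a)]. sum_list (map (M (refl_pos a (Suc a) b)) (outs n a (Suc a))) =
          sum_list (map (M b) (outs n a (Suc a)))"
    proof
      fix b assume "b \<in> set [a..<Suc (Suc a)]"
      then have "b = a \<or> b = Suc a" by auto
      then show "sum_list (map (M (refl_pos a (Suc a) b)) (outs n a (Suc a))) = sum_list (map (M b) (outs n a (Suc a)))"
        using r1 r2 E by auto
    qed
  qed
  have fst: "(\<lambda>t. lab (refl_pos a (Suc a) t)) = (\<lambda>t. if lab t = i then j else if lab t = j then i else lab t)"
  proof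
    fix t
    show "lab (refl_pos a (Suc a) t) = (if lab t = i then j else if lab t = j then i else lab t)"
    proof (cases "t = a \<or> t = Suc a")
      case True
      then show ?thesis using r1 r2 li lj ij by auto
    next
      case False
      then have "refl_pos a (Suc a) t = t" unfolding refl_pos_def by auto
      moreover have "lab t \<noteq> i" "lab t \<noteq> j" using ui uj False by auto
      ultimately show ?thesis by simp
    qed
  qed
  show ?thesis
    unfolding swap_labels_def
    using snd_s_act[of n a "Suc a" "(lab, M)"] fst_s_act[of n a "Suc a" "(lab, M)"] snd fst
    by (metis fst_conv prod.collapse snd_conv)
qed

lemma core:
  assumes d: "is_diagram n l linf (lab, m)" and ab: "pa < pb" "pb \<le> n" "1 \<le> pa"
    and li: "lab pa = i" and lj: "lab pb = j"
    and ui: "\<forall>t. lab t = i \<longrightarrow> t = pa" and uj: "\<forall>t. lab t = j \<longrightarrow> t = pb"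
    and ij: "i \<noteq> j" and lij: "l i = l j"
  shows "\<exists>w. cactus_word n w \<and> act_word n w (lab, m) = swap_labels i j (lab, m)"
proof -
  have sym: "\<forall>a b. m a b = m b a" and dg: "\<forall>a. m a a = 0" and z: "\<forall>a b. n < a \<longrightarrow> m a b = 0"
    and nc: "NC m" and val: "\<forall>p\<in>{1..n}. (\<Sum>q\<le>n. m p q) = l (lab p)"
    using d unfolding is_diagram_def NC_def Let_def by auto
  have Va: "(\<Sum>u\<le>n. m pa u) = l i" using val ab li by auto
  have Vb: "(\<Sum>u\<le>n. m pb u) = l j" using val ab lj by auto
  show ?thesis
  proof (cases "pb = Suc pa")
    case True
    have V: "(\<Sum>u\<le>n. m pa u) = (\<Sum>u\<le>n. m (Suc pa) u)" using Va Vb lij True by simp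
    have uj2: "\<forall>t. lab t = j \<longrightarrow> t = Suc pa" using uj True by simp
    have "act_word n [(pa, Suc pa)] (lab, m) = s_act n pa (Suc pa) (lab, m)"
      unfolding act_word_def by simp
    also have "\<dots> = swap_labels i j (lab, m)"
    proof -
      have an: "Suc pa \<le> n" using True ab by simp
      have lj2: "lab (Suc pa) = j" using True lj by simp
      show ?thesis by (rule adj[OF sym dg z V an li lj2 ui uj2 ij])
    qed
    finally have "act_word n [(pa, Suc pa)] (lab, m) = swap_labels i j (lab, m)" .
    moreover have "cactus_word n [(pa, Suc pa)]" using True ab unfolding cactus_word_def by auto
    ultimately show ?thesis by blast
  next
    case False
    then have ab2: "Suc pa < pb" using ab by auto
    define s1 where "s1 = s_act n (Suc pa) pb"
    define y where "y = s1 (lab, m)"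
    define lab' where "lab' = (\<lambda>t. lab (refl_pos (Suc pa) pb t))"
    define M where "M = Sm n (Suc pa) pb m"
    have y: "y = (lab', M)" unfolding y_def s1_def lab'_def M_def
      using fst_s_act[of n "Suc pa" pb "(lab,m)"] snd_s_act[of n "Suc pa" pb "(lab,m)"]
      by (metis fst_conv prod.collapse snd_conv)
    have pq: "Suc pa \<le> pb" "pb \<le> n" using ab2 ab by auto
    have r1: "refl_pos (Suc pa) pb pa = pa" and r2: "refl_pos (Suc pa) pb (Suc pa) = pb"
      using pq unfolding refl_pos_def by auto
    have symM: "\<forall>a b. M a b = M b a" unfolding M_def using Sm_sym[of m, OF sym] by blast
    have dgM: "\<forall>a. M a a = 0" unfolding M_def using Sm_diag[of m, OF dg] by blast
    have zM: "\<forall>a b. n < a \<longrightarrow> M a b = 0" unfolding M_def using Sm_zero by blast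
    have VM: "(\<Sum>u\<le>n. M pa u) = (\<Sum>u\<le>n. M (Suc pa) u)"
      unfolding M_def using valence_Sm[OF sym pq, of pa] valence_Sm[OF sym pq, of "Suc pa"] r1 r2 ab Va Vb lij
      by simp
    have ui': "\<forall>t. lab' t = i \<longrightarrow> t = pa"
    proof (intro allI impI)
      fix t assume "lab' t = i"
      then have "refl_pos (Suc pa) pb t = pa" using ui unfolding lab'_def by blast
      then have "refl_pos (Suc pa) pb (refl_pos (Suc pa) pb t) = refl_pos (Suc pa) pb pa" by simp
      then show "t = pa" using r1 by simp
    qed
    have uj': "\<forall>t. lab' t = j \<longrightarrow> t = Suc pa"
    proof (intro allI impI)
      fix t assume "lab' t = j"
      then have "refl_pos (Suc pa) pb t = pb" using uj unfolding lab'_def by blast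
      then have "refl_pos (Suc pa) pb (refl_pos (Suc pa) pb t) = refl_pos (Suc pa) pb pb" by simp
      moreover have "refl_pos (Suc pa) pb pb = Suc pa" using pq by (simp add: refl_pos_def)
      ultimately show "t = Suc pa" by (simp only: refl_refl)
    qed
    have li': "lab' pa = i" unfolding lab'_def using r1 li by simp
    have lj': "lab' (Suc pa) = j" unfolding lab'_def using r2 lj by simp
    have sw: "s_act n pa (Suc pa) y = swap_labels i j y"
    proof -
      have an: "Suc pa \<le> n" using ab2 ab by simp
      show ?thesis unfolding y by (rule adj[OF symM dgM zM VM an li' lj' ui' uj' ij])
    qed
    have inv: "s1 y = (lab, m)"
    proof -
      have "fst (s1 y) = lab" unfolding y_def s1_def by (simp add: fst_s_act)
      moreover have "snd (s1 y) = m" unfolding y_def s1_def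
        by (simp add: snd_s_act Sm_Sm[OF nc sym pq z])
      ultimately show ?thesis by (metis prod.collapse)
    qed
    define w where "w = [(Suc pa, pb), (pa, Suc pa), (Suc pa, pb)]"
    have "act_word n w (lab, m) = s1 (s_act n pa (Suc pa) y)"
      unfolding w_def act_word_def y_def s1_def by simp
    also have "\<dots> = swap_labels i j (lab, m)" using sw swap_comm inv unfolding s1_def by metis
    finally have "act_word n w (lab, m) = swap_labels i j (lab, m)" .
    moreover have "cactus_word n w" using ab2 ab unfolding cactus_word_def w_def by auto
    ultimately show ?thesis by blast
  qed
qed

theorem mainTheorem2:
  fixes n :: nat and l :: "nat \<Rightarrow> nat" and linf :: nat and x :: diagram and i j :: nat
  assumes "x \<in> X n l linf"
    and "i \<in> {1..n}" and "j \<in> {1..n}" and "i \<noteq> j"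
    and "l i = l j"
  shows "\<exists>w. cactus_word n w \<and> act_word n w x = swap_labels i j x"
proof -
  obtain lab m where x: "x = (lab, m)" by fastforce
  have d: "is_diagram n l linf (lab, m)" using assms(1) x unfolding X_def by simp
  have bij: "bij_betw lab {1..n} {1..n}" and z0: "\<forall>p. p \<notin> {1..n} \<longrightarrow> lab p = 0"
    using d unfolding is_diagram_def Let_def by auto
  obtain pa where pa: "pa \<in> {1..n}" "lab pa = i" using bij assms(2) by (metis bij_betw_iff_bijections)
  obtain pb where pb: "pb \<in> {1..n}" "lab pb = j" using bij assms(3) by (metis bij_betw_iff_bijections)
  have uniq: "t = s" if "lab t = k" "lab s = k" "s \<in> {1..n}" "k \<in> {1..n}" for t s k
  proof -
    have "t \<in> {1..n}" using z0 that by fastforce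
    then show ?thesis using bij that unfolding bij_betw_def inj_on_def by blast
  qed
  have ui: "\<forall>t. lab t = i \<longrightarrow> t = pa" using uniq pa assms(2) by blast
  have uj: "\<forall>t. lab t = j \<longrightarrow> t = pb" using uniq pb assms(3) by blast
  have "pa \<noteq> pb" using pa pb assms(4) by auto
  then consider "pa < pb" | "pb < pa" by linarith
  then show ?thesis
  proof cases
    case 1
    have b1: "pb \<le> n" "1 \<le> pa" using pa pb by auto
    show ?thesis using core[OF d 1 b1 pa(2) pb(2) ui uj assms(4) assms(5)] x by simp
  next
    case 2
    have b1: "pa \<le> n" "1 \<le> pb" using pa pb by auto
    have ji: "j \<noteq> i" "l j = l i" using assms(4,5) by auto
    have "\<exists>w. cactus_word n w \<and> act_word n w (lab, m) = swap_labels j i (lab, m)"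
      using core[OF d 2 b1 pb(2) pa(2) uj ui ji] .
    then show ?thesis using swap_sym[OF assms(4)] x by metis
  qed
qed

end
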